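(* Let $\mathbb{R}^n$ be endowed with the $\ell_1$ norm and $\mathbb{R}^p$ with a norm $\|\cdot\|$. Let $A\in\mathbb{R}^{m\times n}$, $b\in\mathbb{R}^m$ and $E\in\mathbb{R}^{p\times m}$ be such that $\begin{bmatrix}EA\\ b^{\mathsf T}A\end{bmatrix}$ has at least two different columns. Let $f:\mathbb{R}^m\to\mathbb{R}\cup\{\infty\}$ be $f(u)=g(Eu)+\langle b,u\rangle$, where $g:\mathbb{R}^p\to\mathbb{R}\cup\{\infty\}$ is a differentiable convex function that is $\mu_g$-strongly convex on $\mathrm{conv}(EA)$ for some $\mu_g>0$, and $\mathrm{conv}(A)\subseteq\mathrm{dom}(f)$. Then $v=\frac{2}{\mu_g}\nabla g(Eu^\star)$ is the same for all $u^\star\in\operatorname{Argmin}_{u\in\mathrm{conv}(A)}f(u)$, and \[ \mu^\star_{f,A}\ge\frac{\mu_g\cdot\Phi_v(\bar A)^2}{4}>0,\qquad\text{where } \bar A:=\begin{bmatrix}EA\\ \frac{2}{\mu_g}b^{\mathsf T}A\end{bmatrix}\in\mathbb{R}^{(p+1)\times n}. \]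
   Context: $g$ is $\mu_g$-strongly convex on $S$ if $g(w')\ge g(w)+\langle\nabla g(w),w'-w\rangle+\frac{\mu_g}{2}\|w'-w\|^2$ for all $w,w'\in S$. $\Delta_{n-1}=\{x\in\mathbb{R}^n_+:\sum_ix_i=1\}$; a matrix is identified with the set of its columns; $\mathrm{conv}(A)=\{Ax:x\in\Delta_{n-1}\}$. Quadratic functional growth constant: with $f^\star=\min_{x\in\Delta_{n-1}}f(Ax)$ and $Z^\star=\{z\in\Delta_{n-1}:f(Az)=f^\star\}$, $\mu^\star_{f,A}=\inf_{x\in\Delta_{n-1}\setminus Z^\star}\frac{2(f(Ax)-f^\star)}{\mathrm{dist}(x,Z^\star)^2}$, where $\mathrm{dist}(x,Z^\star)=\min_{z\in Z^\star}\|x-z\|_1$. Local facial distance: for $v\in\mathbb{R}^p$ and $\bar w=(w,w_{p+1})\in\mathbb{R}^{p+1}$ put $\|\bar w\|_v=\sqrt{\|w\|^2+|\langle v,w\rangle+w_{p+1}|}$, and for nonempty $F,G\subseteq\mathbb{R}^{p+1}$ put $\mathrm{dist}_v(F,G)=\min_{\bar w\in F,\bar w'\in G}\|\bar w-\bar w'\|_v$. For $\bar A\in\mathbb{R}^{(p+1)\times n}$ with at least two different columns let $F(v)=\operatorname{Argmin}_{\bar w\in\mathrm{conv}(\bar A)}\langle (v,1),\bar w\rangle$ (a face of $\mathrm{conv}(\bar A)$), and $\Phi_v(\bar A)=\min\{\mathrm{dist}_v(G,\mathrm{conv}(\bar A\setminus G)): G\text{ a face of }F(v),\ \emptyset\ne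 G\ne\mathrm{conv}(\bar A)\}$, where $\bar A\setminus G$ denotes the columns of $\bar A$ not in $G$. *)

theory Defs
  imports "HOL-Analysis.Analysis"
begin

definition is_norm :: "(real^'p \<Rightarrow> real) \<Rightarrow> bool" where
  "is_norm N \<longleftrightarrow> (\<forall>x. 0 \<le> N x) \<and> (\<forall>x. N x = 0 \<longleftrightarrow> x = 0)
     \<and> (\<forall>c x. N (c *\<^sub>R x) = \<bar>c\<bar> * N x) \<and> (\<forall>x y. N (x + y) \<le> N x + N y)"

definition std_simplex :: "(real^'n) set" where
  "std_simplex = {x. (\<forall>i. 0 \<le> x$i) \<and> (\<Sum>i\<in>UNIV. x$i) = 1}"

definition l1dist :: "real^'n \<Rightarrow> real^'n \<Rightarrow> real" where
  "l1dist x z = (\<Sum>i\<in>UNIV. \<bar>x$i - z$i\<bar>)"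

definition ext_convex :: "('a::real_vector \<Rightarrow> ereal) \<Rightarrow> bool" where
  "ext_convex g \<longleftrightarrow> (\<forall>x y t. 0 \<le> t \<and> t \<le> 1 \<longrightarrow>
      g ((1 - t) *\<^sub>R x + t *\<^sub>R y) \<le> ereal (1 - t) * g x + ereal t * g y)"

definition grad :: "(real^'p \<Rightarrow> ereal) \<Rightarrow> real^'p \<Rightarrow> real^'p" where
  "grad g w = (SOME d. ((\<lambda>x. real_of_ereal (g x)) has_derivative (\<lambda>h. d \<bullet> h)) (at w))"

definition strongly_convex_on ::
  "(real^'p \<Rightarrow> real) \<Rightarrow> (real^'p \<Rightarrow> ereal) \<Rightarrow> real \<Rightarrow> (real^'p) set \<Rightarrow> bool" where
  "strongly_convex_on N g \<mu> S \<longleftrightarrow> (\<forall>w\<in>S. \<forall>w'\<in>S.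
      g w' \<ge> g w + ereal (grad g w \<bullet> (w' - w) + \<mu> / 2 * (N (w' - w))\<^sup>2))"

definition argmin_on :: "'a set \<Rightarrow> ('a \<Rightarrow> 'b::order) \<Rightarrow> 'a set" where
  "argmin_on S f = {u \<in> S. \<forall>u'\<in>S. f u \<le> f u'}"

text \<open>Quadratic functional growth constant mu*_{f,A} (infimum over the empty set is +\<infinity>).\<close>
definition qfg_const :: "(real^'m \<Rightarrow> ereal) \<Rightarrow> real^'n^'m \<Rightarrow> ereal" where
  "qfg_const f A =
    (let fs = (INF x\<in>std_simplex. f (A *v x));
         Z = {z \<in> std_simplex. f (A *v z) = fs}
     in (INF x\<in>std_simplex - Z.
           2 * (f (A *v x) - fs) / ereal ((INF z\<in>Z. l1dist x z)\<^sup>2)))"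

definition vnorm :: "(real^'p \<Rightarrow> real) \<Rightarrow> real^'p \<Rightarrow> (real^'p) \<times> real \<Rightarrow> real" where
  "vnorm N v w = sqrt ((N (fst w))\<^sup>2 + \<bar>v \<bullet> fst w + snd w\<bar>)"

definition distv :: "(real^'p \<Rightarrow> real) \<Rightarrow> real^'p \<Rightarrow> ((real^'p) \<times> real) set
    \<Rightarrow> ((real^'p) \<times> real) set \<Rightarrow> real" where
  "distv N v F G = Inf {vnorm N v (w - w') | w w'. w \<in> F \<and> w' \<in> G}"

definition Fface :: "real^'p \<Rightarrow> ('n \<Rightarrow> (real^'p) \<times> real) \<Rightarrow> ((real^'p) \<times> real) set" where
  "Fface v cols = argmin_on (convex hull (range cols)) (\<lambda>w. v \<bullet> fst w + snd w)"

definition local_facial_distance ::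
  "(real^'p \<Rightarrow> real) \<Rightarrow> real^'p \<Rightarrow> ('n \<Rightarrow> (real^'p) \<times> real) \<Rightarrow> real" where
  "local_facial_distance N v cols =
     Inf {distv N v G (convex hull {cols j | j. cols j \<notin> G}) | G.
            G face_of Fface v cols \<and> G \<noteq> {} \<and> G \<noteq> convex hull (range cols)}"

end

theory Submission
  imports Defs
begin



lemma simplex_mem: "x \<in> std_simplex \<longleftrightarrow> (\<forall>i. 0 \<le> x$i) \<and> (\<Sum>i\<in>UNIV. x$i) = 1"
  by (simp add: std_simplex_def)

lemma axis_simplex: "axis j (1::real) \<in> std_simplex"
  by (simp add: simplex_mem axis_def)

lemma sum_axis_scaleR: "(\<Sum>k\<in>UNIV. (axis j (1::real))$k *\<^sub>R (c::'n::finite\<Rightarrow>'v::real_vector) k) = c j"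
proof -
  have "\<And>k. (axis j (1::real))$k *\<^sub>R c k = (if k = j then c j else 0)" by (simp add: axis_def)
  then show ?thesis by simp
qed

lemma hull_repr_sub:
  fixes c :: "'n::finite \<Rightarrow> 'v::real_vector"
  assumes "y \<in> convex hull (c ` J)"
  shows "\<exists>x\<in>std_simplex. (\<forall>j. j \<notin> J \<longrightarrow> x$j = 0) \<and> y = (\<Sum>j\<in>UNIV. x$j *\<^sub>R c j)"
proof -
  let ?T = "{(\<Sum>j\<in>UNIV. x$j *\<^sub>R c j) | x. x \<in> std_simplex \<and> (\<forall>j. j \<notin> J \<longrightarrow> x$j = 0)}"
  have "convex ?T"
  proof (rule convexI)
    fix y1 y2 and u v :: real
    assume y12: "y1 \<in> ?T" "y2 \<in> ?T" and uv0: "0 \<le> u" "0 \<le> v" "u + v = 1"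
    then have uv: "0 \<le> u \<and> 0 \<le> v \<and> u + v = 1" by simp
    from y12 obtain x1 x2 where x1: "x1 \<in> std_simplex" "\<forall>j. j \<notin> J \<longrightarrow> x1$j = 0" "y1 = (\<Sum>j\<in>UNIV. x1$j *\<^sub>R c j)"
      and x2: "x2 \<in> std_simplex" "\<forall>j. j \<notin> J \<longrightarrow> x2$j = 0" "y2 = (\<Sum>j\<in>UNIV. x2$j *\<^sub>R c j)" by blast
    have "u *\<^sub>R x1 + v *\<^sub>R x2 \<in> std_simplex"
      using x1(1) x2(1) uv by (simp add: simplex_mem sum.distrib sum_distrib_left[symmetric])
    moreover have "\<forall>j. j \<notin> J \<longrightarrow> (u *\<^sub>R x1 + v *\<^sub>R x2)$j = 0" using x1 x2 by simp
    moreover have "u *\<^sub>R y1 + v *\<^sub>R y2 = (\<Sum>j\<in>UNIV. (u *\<^sub>R x1 + v *\<^sub>R x2)$j *\<^sub>R c j)"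
      using x1(3) x2(3) by (simp add: scaleR_add_left sum.distrib scaleR_sum_right)
    ultimately have "\<exists>x. u *\<^sub>R y1 + v *\<^sub>R y2 = (\<Sum>j\<in>UNIV. x$j *\<^sub>R c j) \<and> x \<in> std_simplex \<and> (\<forall>j. j \<notin> J \<longrightarrow> x$j = 0)"
      by blast
    then show "u *\<^sub>R y1 + v *\<^sub>R y2 \<in> ?T" by simp
  qed
  moreover have "c ` J \<subseteq> ?T"
  proof
    fix y assume "y \<in> c ` J"
    then obtain j where "j \<in> J" "y = c j" by blast
    then show "y \<in> ?T"
      using axis_simplex[of j] sum_axis_scaleR[of j c]
      by (intro CollectI exI[of _ "axis j 1"]) (auto simp: axis_def)
  qed
  ultimately have "convex hull (c ` J) \<subseteq> ?T" by (rule hull_minimal[rotated])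
  then show ?thesis using assms by blast
qed

lemma hull_repr_mem:
  fixes c :: "'n::finite \<Rightarrow> 'v::real_vector"
  assumes "x \<in> std_simplex" "\<And>j. x$j \<noteq> 0 \<Longrightarrow> j \<in> K"
  shows "(\<Sum>j\<in>UNIV. x$j *\<^sub>R c j) \<in> convex hull (c ` K)"
proof -
  have s: "(\<Sum>j\<in>UNIV. x$j *\<^sub>R c j) = (\<Sum>j\<in>K. x$j *\<^sub>R c j)"
    using assms(2) by (intro sum.mono_neutral_right) auto
  have s1: "(\<Sum>j\<in>K. x$j) = 1"
    using assms by (metis (mono_tags, lifting) DiffD2 finite sum.mono_neutral_right simplex_mem subset_UNIV)
  show ?thesis unfolding s
    by (rule convex_sum) (use assms s1 in \<open>auto simp: simplex_mem hull_inc\<close>)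
qed

lemma hull_repr:
  fixes c :: "'n::finite \<Rightarrow> 'v::real_vector"
  shows "convex hull (range c) = (\<lambda>x. \<Sum>j\<in>UNIV. x$j *\<^sub>R c j) ` std_simplex"
  using hull_repr_sub[of _ c UNIV] hull_repr_mem[of _ UNIV c] by auto

lemma simplex_hull: "std_simplex = convex hull (range (\<lambda>j::'n::finite. axis j (1::real)))"
proof -
  have "\<And>x::real^'n. (\<Sum>j\<in>UNIV. x$j *\<^sub>R axis j 1) = x"
    by (metis (no_types) basis_expansion scalar_mult_eq_scaleR)
  then show ?thesis unfolding hull_repr by simp
qed

lemma simplex_compact: "compact (std_simplex :: (real^'n::finite) set)"
  unfolding simplex_hull by (simp add: finite_imp_compact_convex_hull)

lemma Av_sum: "(A::real^'n^'m) *v x = (\<Sum>j\<in>UNIV. x$j *\<^sub>R column j A)"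
  by (simp add: matrix_mult_sum scalar_mult_eq_scaleR)




lemma deriv_repr:
  fixes D :: "'a::euclidean_space \<Rightarrow> real"
  assumes "bounded_linear D"
  shows "\<exists>d. D = (\<lambda>h. d \<bullet> h)"
proof
  have L: "linear D" using assms bounded_linear.linear by blast
  show "D = (\<lambda>h. (\<Sum>i\<in>Basis. D i *\<^sub>R i) \<bullet> h)"
  proof
    fix h
    have "D h = D (\<Sum>i\<in>Basis. (h \<bullet> i) *\<^sub>R i)" by (simp add: euclidean_representation)
    also have "\<dots> = (\<Sum>i\<in>Basis. (h \<bullet> i) * D i)"
      using L by (simp add: linear_sum linear_scale)
    also have "\<dots> = (\<Sum>i\<in>Basis. D i * (i \<bullet> h))"
      by (simp add: inner_commute mult.commute)
    also have "\<dots> = (\<Sum>i\<in>Basis. D i *\<^sub>R i) \<bullet> h"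
      by (simp add: inner_sum_left)
    finally show "D h = (\<Sum>i\<in>Basis. D i *\<^sub>R i) \<bullet> h" .
  qed
qed

locale thm_ctx =
  fixes N :: "real^'p \<Rightarrow> real"
    and A :: "real^'n^'m" and b :: "real^'m" and E :: "real^'m^'p"
    and g :: "real^'p \<Rightarrow> ereal" and \<mu> :: real
  assumes norm: "is_norm N"
    and two_cols: "\<exists>i j. (E *v column i A, b \<bullet> column i A) \<noteq> (E *v column j A, b \<bullet> column j A)"
    and g_proper: "\<forall>w. g w \<noteq> -\<infinity>"
    and g_convex: "ext_convex g"
    and g_diff: "\<forall>w. g w \<noteq> \<infinity> \<longrightarrow>
        (\<exists>U. open U \<and> w \<in> U \<and> (\<forall>x\<in>U. g x \<noteq> \<infinity>)) \<and>
        (\<lambda>x. real_of_ereal (g x)) differentiable (at w)"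
    and mu_pos: "\<mu> > 0"
    and g_strong: "strongly_convex_on N g \<mu> (convex hull (range (\<lambda>j. E *v column j A)))"
    and dom: "\<forall>u \<in> convex hull (range (\<lambda>j. column j A)). g (E *v u) + ereal (b \<bullet> u) \<noteq> \<infinity>"
begin

abbreviation "S \<equiv> convex hull (range (\<lambda>j. column j A))"
abbreviation "SE \<equiv> convex hull (range (\<lambda>j. E *v column j A))"

definition gr :: "real^'p \<Rightarrow> real" where "gr w = real_of_ereal (g w)"
definition phi :: "real^'m \<Rightarrow> real" where "phi u = gr (E *v u) + b \<bullet> u"

lemma N_nonneg: "0 \<le> N x" using norm by (simp add: is_norm_def)
lemma N_zero: "N x = 0 \<longleftrightarrow> x = 0" using norm by (simp add: is_norm_def)
lemma N_scale: "N (c *\<^sub>R x) = \<bar>c\<bar> * N x" using norm by (simp add: is_norm_def)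
lemma N_tri: "N (x + y) \<le> N x + N y" using norm by (simp add: is_norm_def)
lemma N_minus: "N (- x) = N x" using N_scale[of "-1" x] by simp
lemma N_comm: "N (x - y) = N (y - x)" using N_minus[of "x - y"] by simp

lemma EAv: "E *v (A *v x) = (\<Sum>j\<in>UNIV. x$j *\<^sub>R (E *v column j A))"
proof -
  have L: "linear (\<lambda>u. E *v u)" by simp
  show ?thesis by (simp only: Av_sum[of A] linear_sum[OF L] linear_scale[OF L] o_def)
qed

lemma S_repr: "S = (\<lambda>x. A *v x) ` std_simplex"
  unfolding hull_repr Av_sum by simp

lemma SE_repr: "SE = (\<lambda>x. E *v (A *v x)) ` std_simplex"
  unfolding hull_repr EAv by simp

lemma SE_img: "u \<in> S \<Longrightarrow> E *v u \<in> SE"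
  unfolding S_repr SE_repr by auto

lemma S_convex: "convex S" by simp
lemma SE_convex: "convex SE" by simp

lemma g_fin_S: "u \<in> S \<Longrightarrow> g (E *v u) = ereal (gr (E *v u))"
proof -
  assume u: "u \<in> S"
  have "g (E *v u) \<noteq> \<infinity>" using dom u by auto
  moreover have "g (E *v u) \<noteq> -\<infinity>" using g_proper by auto
  ultimately show ?thesis unfolding gr_def by (cases "g (E *v u)") auto
qed

lemma g_fin_SE: "w \<in> SE \<Longrightarrow> g w = ereal (gr w)"
proof -
  assume "w \<in> SE"
  then obtain x where "x \<in> std_simplex" "w = E *v (A *v x)" unfolding SE_repr by auto
  moreover have "A *v x \<in> S" using \<open>x \<in> std_simplex\<close> unfolding S_repr by auto
  ultimately show ?thesis using g_fin_S by auto
qed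

lemma f_fin: "u \<in> S \<Longrightarrow> g (E *v u) + ereal (b \<bullet> u) = ereal (phi u)"
  using g_fin_S by (simp add: phi_def)

lemma grad_deriv: assumes "w \<in> SE" shows "(gr has_derivative (\<lambda>h. grad g w \<bullet> h)) (at w)"
proof -
  have "g w \<noteq> \<infinity>" using g_fin_SE[OF assms] by simp
  then have "gr differentiable (at w)" using g_diff unfolding gr_def[abs_def] by blast
  then obtain D where D: "(gr has_derivative D) (at w)" unfolding differentiable_def by blast
  then obtain d where "D = (\<lambda>h. d \<bullet> h)" using deriv_repr has_derivative_bounded_linear by blast
  with D have "\<exists>d. ((\<lambda>x. real_of_ereal (g x)) has_derivative (\<lambda>h. d \<bullet> h)) (at w)"
    unfolding gr_def[abs_def] by blast
  then have "((\<lambda>x. real_of_ereal (g x)) has_derivative (\<lambda>h. grad g w \<bullet> h)) (at w)"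
    unfolding grad_def by (rule someI_ex)
  then show ?thesis unfolding gr_def[abs_def] .
qed

lemma SC: assumes "w \<in> SE" "w' \<in> SE"
  shows "gr w' \<ge> gr w + grad g w \<bullet> (w' - w) + \<mu> / 2 * (N (w' - w))\<^sup>2"
proof -
  have "g w' \<ge> g w + ereal (grad g w \<bullet> (w' - w) + \<mu> / 2 * (N (w' - w))\<^sup>2)"
    using g_strong assms unfolding strongly_convex_on_def by blast
  then show ?thesis using g_fin_SE[OF assms(1)] g_fin_SE[OF assms(2)] by simp
qed

lemma Ev_cont: "isCont (\<lambda>u. E *v u) u"
  by (rule linear_continuous_at) (simp add: linear_conv_bounded_linear[symmetric])

lemma phi_cont: "continuous_on S phi"
proof (rule continuous_at_imp_continuous_on, rule ballI)
  fix u assume "u \<in> S"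
  then have "E *v u \<in> SE" by (rule SE_img)
  then have "isCont gr (E *v u)" using grad_deriv has_derivative_continuous by blast
  then have "isCont (\<lambda>u. gr (E *v u)) u" using Ev_cont isCont_o2 by blast
  then show "isCont phi u" unfolding phi_def[abs_def] by (intro continuous_intros)
qed

lemma S_compact: "compact S" by (simp add: finite_imp_compact_convex_hull)
lemma S_ne: "S \<noteq> {}" by simp

lemma exists_min: "\<exists>u\<in>S. \<forall>u'\<in>S. phi u \<le> phi u'"
  using continuous_attains_inf[OF S_compact S_ne phi_cont] .

lemma argmin_char:
  "u \<in> argmin_on S (\<lambda>u. g (E *v u) + ereal (b \<bullet> u)) \<longleftrightarrow> u \<in> S \<and> (\<forall>u'\<in>S. phi u \<le> phi u')"
  unfolding argmin_on_def using f_fin by auto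

lemma unique:
  assumes u1: "u1 \<in> S" "\<forall>u'\<in>S. phi u1 \<le> phi u'" and u2: "u2 \<in> S" "\<forall>u'\<in>S. phi u2 \<le> phi u'"
  shows "E *v u1 = E *v u2 \<and> b \<bullet> u1 = b \<bullet> u2"
proof -
  define um where "um = (1/2) *\<^sub>R u1 + (1/2) *\<^sub>R u2"
  have um: "um \<in> S" unfolding um_def using u1(1) u2(1) S_convex
    by (intro convexD) auto
  define w1 where "w1 = E *v u1"
  define w2 where "w2 = E *v u2"
  have wm: "E *v um = (1/2) *\<^sub>R w1 + (1/2) *\<^sub>R w2"
    unfolding um_def w1_def w2_def by (simp only: matrix_vector_right_distrib matrix_vector_mult_scaleR)
  have Em: "E *v um \<in> SE" "w1 \<in> SE" "w2 \<in> SE" using SE_img um u1 u2 w1_def w2_def by auto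
  have d1: "w1 - E *v um = (1/2) *\<^sub>R (w1 - w2)" unfolding wm by (simp add: vec_eq_iff field_simps)
  have d2: "w2 - E *v um = (-1/2) *\<^sub>R (w1 - w2)" unfolding wm by (simp add: vec_eq_iff field_simps)
  have s1: "gr w1 \<ge> gr (E *v um) + grad g (E *v um) \<bullet> (w1 - E *v um) + \<mu> / 2 * (N (w1 - E *v um))\<^sup>2"
    using SC Em by blast
  have s2: "gr w2 \<ge> gr (E *v um) + grad g (E *v um) \<bullet> (w2 - E *v um) + \<mu> / 2 * (N (w2 - E *v um))\<^sup>2"
    using SC Em by blast
  have n1: "N (w1 - E *v um) = N (w1 - w2) / 2" unfolding d1 N_scale by simp
  have n2: "N (w2 - E *v um) = N (w1 - w2) / 2" unfolding d2 N_scale by simp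
  have i12: "grad g (E *v um) \<bullet> (w1 - E *v um) + grad g (E *v um) \<bullet> (w2 - E *v um) = 0"
    unfolding d1 d2 by (simp add: inner_scaleR_right)
  have bm: "b \<bullet> um = (b \<bullet> u1 + b \<bullet> u2) / 2" unfolding um_def by (simp add: inner_add_right)
  have p: "phi u1 \<le> phi um" "phi u2 \<le> phi um" using u1 u2 um by auto
  define Q where "Q = \<mu> / 4 * (N (w1 - w2))\<^sup>2"
  have "gr w1 + gr w2 \<ge> 2 * gr (E *v um) + Q"
    using s1 s2 i12 unfolding n1 n2 Q_def by (simp add: power_divide)
  moreover have "gr w1 + b \<bullet> u1 \<le> gr (E *v um) + b \<bullet> um" "gr w2 + b \<bullet> u2 \<le> gr (E *v um) + b \<bullet> um"
    using p unfolding phi_def w1_def w2_def by auto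
  ultimately have "Q \<le> 0" using bm by argo
  then have "\<mu> / 4 * (N (w1 - w2))\<^sup>2 \<le> 0" unfolding Q_def .
  then have "(N (w1 - w2))\<^sup>2 \<le> 0" using mu_pos
    by (simp add: mult_le_0_iff)
  then have "N (w1 - w2) = 0" by simp
  then have E12: "w1 = w2" using N_zero by simp
  then have "gr (E *v u1) = gr (E *v u2)" unfolding w1_def w2_def by simp
  moreover have "phi u1 = phi u2" using u1 u2 by (meson antisym)
  ultimately show ?thesis using E12 unfolding phi_def w1_def w2_def by simp
qed

lemma first_order:
  assumes us: "us \<in> S" "\<forall>u'\<in>S. phi us \<le> phi u'" and u: "u \<in> S"
  shows "grad g (E *v us) \<bullet> (E *v u - E *v us) + b \<bullet> (u - us) \<ge> 0"
proof (rule ccontr)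
  define D where "D = grad g (E *v us) \<bullet> (E *v u - E *v us) + b \<bullet> (u - us)"
  assume "\<not> ?thesis"
  then have Dneg: "D < 0" unfolding D_def by simp
  define h where "h t = phi (us + t *\<^sub>R (u - us))" for t
  have gd: "(gr has_derivative (\<lambda>h. grad g (E *v us) \<bullet> h)) (at (E *v us + 0 *\<^sub>R (E *v u - E *v us)))"
    using grad_deriv[OF SE_img[OF us(1)]] by simp
  have l: "((\<lambda>t. E *v us + t *\<^sub>R (E *v u - E *v us)) has_derivative (\<lambda>t. t *\<^sub>R (E *v u - E *v us))) (at 0)"
    by (auto intro!: derivative_eq_intros)
  have c1: "((\<lambda>t. gr (E *v us + t *\<^sub>R (E *v u - E *v us))) has_derivative
      (\<lambda>t. grad g (E *v us) \<bullet> (t *\<^sub>R (E *v u - E *v us)))) (at 0)"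
    using diff_chain_at[OF l gd] by (simp add: o_def)
  have c2: "((\<lambda>t. b \<bullet> (us + t *\<^sub>R (u - us))) has_derivative (\<lambda>t. b \<bullet> (t *\<^sub>R (u - us)))) (at 0)"
    by (auto intro!: derivative_eq_intros)
  have hE: "h = (\<lambda>t. gr (E *v us + t *\<^sub>R (E *v u - E *v us)) + b \<bullet> (us + t *\<^sub>R (u - us)))"
    unfolding h_def phi_def by (simp add: algebra_simps)
  have "(h has_derivative (\<lambda>t. D * t)) (at 0)"
    unfolding hE D_def using has_derivative_add[OF c1 c2]
    by (simp add: inner_scaleR_right algebra_simps)
  then have "DERIV h 0 :> D" by (simp add: has_field_derivative_def)
  from DERIV_neg_dec_right[OF this Dneg] obtain d where d: "d > 0" "\<forall>t>0. t < d \<longrightarrow> h 0 > h (0 + t)" by blast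
  define t where "t = min (d/2) 1"
  have t: "0 < t" "t < d" "t \<le> 1" unfolding t_def using d by auto
  have "us + t *\<^sub>R (u - us) = (1 - t) *\<^sub>R us + t *\<^sub>R u" by (simp add: algebra_simps)
  moreover have "(1 - t) *\<^sub>R us + t *\<^sub>R u \<in> S" using t us(1) u S_convex by (intro convexD) auto
  ultimately have "us + t *\<^sub>R (u - us) \<in> S" by simp
  then have "h 0 \<le> h t" using us(2) unfolding h_def by simp
  moreover have "h 0 > h t" using d t by simp
  ultimately show False by simp
qed

end



locale opt_ctx = thm_ctx N A b E g \<mu>
  for N :: "real^'p \<Rightarrow> real"
    and A :: "real^'n^'m" and b :: "real^'m" and E :: "real^'m^'p"
    and g :: "real^'p \<Rightarrow> ereal" and \<mu> :: real +
  fixes us :: "real^'m"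
  assumes us_S: "us \<in> S" and us_min: "\<forall>u'\<in>S. phi us \<le> phi u'"
begin

definition gv where "gv = grad g (E *v us)"
definition v where "v = (2 / \<mu>) *\<^sub>R gv"
definition Abar where "Abar = (\<lambda>j. (E *v column j A, (2 / \<mu>) * (b \<bullet> column j A)))"
definition ab :: "real^'n \<Rightarrow> (real^'p) \<times> real" where "ab x = (\<Sum>j\<in>UNIV. x$j *\<^sub>R Abar j)"
definition cf :: "(real^'p) \<times> real \<Rightarrow> real" where "cf w = v \<bullet> fst w + snd w"
abbreviation "Sbar \<equiv> convex hull (range Abar)"
abbreviation "F \<equiv> Fface v Abar"

definition zs where "zs = (SOME z. z \<in> std_simplex \<and> us = A *v z)"

lemma zs: "zs \<in> std_simplex" "us = A *v zs"
proof -
  have "\<exists>z. z \<in> std_simplex \<and> us = A *v z" using us_S unfolding S_repr by auto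
  then have "zs \<in> std_simplex \<and> us = A *v zs" unfolding zs_def by (rule someI_ex)
  then show "zs \<in> std_simplex" "us = A *v zs" by auto
qed

lemma ab_eq: "ab x = (E *v (A *v x), (2 / \<mu>) * (b \<bullet> (A *v x)))"
proof (rule prod_eqI)
  show "fst (ab x) = fst (E *v (A *v x), (2 / \<mu>) * (b \<bullet> (A *v x)))"
    unfolding ab_def fst_sum EAv Abar_def by simp
  show "snd (ab x) = snd (E *v (A *v x), (2 / \<mu>) * (b \<bullet> (A *v x)))"
    unfolding ab_def snd_sum Av_sum[of A] Abar_def
    by (simp add: inner_sum_right sum_distrib_left mult.commute mult.left_commute)
qed

lemma ab_diff: "ab (x - y) = ab x - ab y"
  unfolding ab_def by (simp add: scaleR_diff_left sum_subtractf)

lemma ab_scale: "ab (c *\<^sub>R x) = c *\<^sub>R ab x"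
  unfolding ab_def by (simp add: scaleR_sum_right)

lemma cf_inner: "cf w = (v, 1) \<bullet> w"
  unfolding cf_def by (cases w) simp

lemma cf_diff: "cf (w - w') = cf w - cf w'"
  unfolding cf_def by (simp add: inner_diff_right)

lemma cf_sum: "cf (\<Sum>j\<in>UNIV. x$j *\<^sub>R c j) = (\<Sum>j\<in>UNIV. x$j * cf (c j))"
  unfolding cf_inner by (simp add: inner_sum_right)

lemma Sbar_repr: "Sbar = ab ` std_simplex"
  unfolding hull_repr ab_def by simp

lemma Abar_in: "Abar j \<in> Sbar" by (simp add: hull_inc)

lemma ab_in: "x \<in> std_simplex \<Longrightarrow> ab x \<in> Sbar" unfolding Sbar_repr by auto

lemma cf_ab_diff: "cf (ab x) - cf (ab zs) = (2/\<mu>) * (gv \<bullet> (E *v (A *v x) - E *v us) + b \<bullet> (A *v x - us))"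
  unfolding cf_def ab_eq v_def zs(2)[symmetric]
  by (simp add: algebra_simps inner_diff_right)

lemma cf_opt: assumes "x \<in> std_simplex" shows "cf (ab zs) \<le> cf (ab x)"
proof -
  have "A *v x \<in> S" using assms unfolding S_repr by auto
  then have "gv \<bullet> (E *v (A *v x) - E *v us) + b \<bullet> (A *v x - us) \<ge> 0"
    using first_order[OF us_S us_min] unfolding gv_def by blast
  then have "cf (ab x) - cf (ab zs) \<ge> 0" unfolding cf_ab_diff using mu_pos by simp
  then show ?thesis by simp
qed

lemma cf_opt': "w \<in> Sbar \<Longrightarrow> cf (ab zs) \<le> cf w"
  unfolding Sbar_repr using cf_opt by auto

lemma F_eq: "F = Sbar \<inter> {w. (v, 1) \<bullet> w = cf (ab zs)}"
proof -
  have z: "ab zs \<in> Sbar" using ab_in zs(1) by blast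
  have F': "F = {w\<in>Sbar. \<forall>u'\<in>Sbar. cf w \<le> cf u'}" by (simp add: Fface_def argmin_on_def cf_def)
  show ?thesis
  proof (rule set_eqI)
    fix w
    show "w \<in> F \<longleftrightarrow> w \<in> Sbar \<inter> {w. (v, 1) \<bullet> w = cf (ab zs)}"
      unfolding F' cf_inner[symmetric]
    proof
      assume "w \<in> {w\<in>Sbar. \<forall>u'\<in>Sbar. cf w \<le> cf u'}"
      then show "w \<in> Sbar \<inter> {w. cf w = cf (ab zs)}" using z cf_opt'[of w] by fastforce
    next
      assume "w \<in> Sbar \<inter> {w. cf w = cf (ab zs)}"
      then show "w \<in> {w\<in>Sbar. \<forall>u'\<in>Sbar. cf w \<le> cf u'}" using cf_opt' by auto
    qed
  qed
qed

lemma F_face: "F face_of Sbar"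
  unfolding F_eq by (rule face_of_Int_supporting_hyperplane_ge) (auto simp: cf_inner[symmetric] cf_opt')

lemma abzs_F: "ab zs \<in> F" unfolding F_eq using ab_in zs(1) cf_inner by simp

lemma phi_gap: assumes x: "x \<in> std_simplex"
  shows "phi (A *v x) - phi us \<ge> \<mu> / 2 * (vnorm N v (ab x - ab zs))\<^sup>2"
proof -
  have AS: "A *v x \<in> S" using x unfolding S_repr by auto
  define d where "d = E *v (A *v x) - E *v us"
  define Nn where "Nn = (N d)\<^sup>2"
  define L where "L = gv \<bullet> d + b \<bullet> (A *v x - us)"
  have sc: "gr (E *v (A *v x)) \<ge> gr (E *v us) + gv \<bullet> d + \<mu> / 2 * Nn"
  proof -
    have "E *v (A *v x) \<in> SE" "E *v us \<in> SE" using SE_img AS us_S by auto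
    from SC[OF this(2) this(1)] show ?thesis unfolding gv_def d_def Nn_def .
  qed
  have c0: "cf (ab x) - cf (ab zs) \<ge> 0" using cf_opt[OF x] by simp
  have fd: "fst (ab x - ab zs) = d" unfolding ab_eq d_def using zs(2) by simp
  have cd: "v \<bullet> fst (ab x - ab zs) + snd (ab x - ab zs) = cf (ab x) - cf (ab zs)"
    using cf_diff unfolding cf_def by simp
  have cL: "cf (ab x) - cf (ab zs) = (2/\<mu>) * L" unfolding L_def d_def by (rule cf_ab_diff)
  have "(vnorm N v (ab x - ab zs))\<^sup>2 = (N (fst (ab x - ab zs)))\<^sup>2 + (cf (ab x) - cf (ab zs))"
    unfolding vnorm_def cd using c0 by simp
  then have "(vnorm N v (ab x - ab zs))\<^sup>2 = Nn + (cf (ab x) - cf (ab zs))"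
    unfolding Nn_def fd .
  then have vn: "\<mu> / 2 * (vnorm N v (ab x - ab zs))\<^sup>2 = \<mu> / 2 * Nn + L"
    unfolding cL using mu_pos by (simp add: field_simps)
  have "phi (A *v x) - phi us = gr (E *v (A *v x)) - gr (E *v us) + b \<bullet> (A *v x - us)"
    unfolding phi_def by (simp add: inner_diff_right)
  then show ?thesis unfolding vn L_def using sc by linarith
qed

lemma Z_char: assumes z: "z \<in> std_simplex" shows "phi (A *v z) = phi us \<longleftrightarrow> ab z = ab zs"
proof
  assume h: "phi (A *v z) = phi us"
  have AS: "A *v z \<in> S" using z unfolding S_repr by auto
  have "\<forall>u'\<in>S. phi (A *v z) \<le> phi u'" using h us_min by simp
  then have "E *v (A *v z) = E *v us \<and> b \<bullet> (A *v z) = b \<bullet> us"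
    using unique[OF AS _ us_S us_min] by blast
  then show "ab z = ab zs" unfolding ab_eq zs(2)[symmetric] by simp
next
  assume "ab z = ab zs"
  then have "E *v (A *v z) = E *v us \<and> (2/\<mu>) * (b \<bullet> (A *v z)) = (2/\<mu>) * (b \<bullet> us)"
    unfolding ab_eq zs(2)[symmetric] by simp
  then show "phi (A *v z) = phi us" using mu_pos unfolding phi_def by simp
qed

lemma supp_in_F:
  assumes z: "z \<in> std_simplex" "ab z = ab zs" and j: "z$j \<noteq> 0"
  shows "Abar j \<in> F"
proof -
  let ?t = "cf (ab zs)"
  have ge: "\<And>k. cf (Abar k) \<ge> ?t" using cf_opt' Abar_in by blast
  have nn: "\<And>k. 0 \<le> z$k" using z(1) by (simp add: simplex_mem)
  have "(\<Sum>k\<in>UNIV. z$k * cf (Abar k)) = ?t" using z(2) cf_sum[of z Abar] unfolding ab_def by simp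
  also have "\<dots> = (\<Sum>k\<in>UNIV. z$k * ?t)" using z(1) by (simp add: simplex_mem sum_distrib_right[symmetric])
  finally have "(\<Sum>k\<in>UNIV. z$k * (cf (Abar k) - ?t)) = 0" by (simp add: algebra_simps sum_subtractf)
  moreover have "\<forall>k\<in>UNIV. 0 \<le> z$k * (cf (Abar k) - ?t)" using ge nn by simp
  ultimately have "z$j * (cf (Abar j) - ?t) = 0" using sum_nonneg_eq_0_iff[of UNIV "\<lambda>k. z$k * (cf (Abar k) - ?t)"] by auto
  then have "cf (Abar j) = ?t" using j by simp
  then show ?thesis unfolding F_eq using Abar_in cf_inner by simp
qed

definition Zs where "Zs = {z \<in> std_simplex. ab z = ab zs}"

lemma ab_cont: "continuous_on UNIV ab"
  unfolding ab_def by (intro continuous_intros)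

lemma Zs_compact: "compact Zs"
proof -
  have "closed {z. ab z = ab zs}" using ab_cont by (intro closed_Collect_eq) (auto intro: continuous_intros)
  then have "compact (std_simplex \<inter> {z. ab z = ab zs})" by (rule compact_Int_closed[OF simplex_compact])
  moreover have "Zs = std_simplex \<inter> {z. ab z = ab zs}" unfolding Zs_def by auto
  ultimately show ?thesis by simp
qed

lemma zs_Zs: "zs \<in> Zs" unfolding Zs_def using zs by simp

end



context opt_ctx
begin

lemma ab_axis: "ab (axis i 1) = Abar i"
  unfolding ab_def by (rule sum_axis_scaleR)

lemma ab_add: "ab (x + y) = ab x + ab y"
  unfolding ab_def by (simp add: scaleR_add_left sum.distrib)

lemma Sbar_polytope: "polytope Sbar"
  unfolding polytope_def by (intro exI[of _ "range Abar"]) auto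

lemma l1_split: fixes t :: real shows "\<bar>t\<bar> = max t 0 + max (- t) 0" "t = max t 0 - max (- t) 0"
  by auto

lemma l1_bound: "l1dist x z \<le> 2" if "x \<in> std_simplex" "z \<in> std_simplex"
proof -
  have "l1dist x z \<le> (\<Sum>i\<in>UNIV. x$i + z$i)" unfolding l1dist_def
    using that by (intro sum_mono) (auto simp: simplex_mem abs_le_iff)
  also have "\<dots> = 2" using that by (simp add: sum.distrib simplex_mem)
  finally show ?thesis .
qed

lemma min_face_relint:
  assumes y: "y \<in> Sbar"
  defines "G0 \<equiv> \<Inter>{H. H face_of Sbar \<and> y \<in> H}"
  shows "G0 face_of Sbar" "y \<in> G0" "y \<in> rel_interior G0"
proof -
  have ne: "{H. H face_of Sbar \<and> y \<in> H} \<noteq> {}" using y face_of_refl[of Sbar] by auto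
  show fG: "G0 face_of Sbar" unfolding G0_def by (rule face_of_Inter[OF ne]) auto
  show yG: "y \<in> G0" unfolding G0_def by auto
  have pG: "polytope G0" using face_of_polytope_polytope[OF Sbar_polytope fG] .
  then have cG: "closed G0" using polytope_imp_compact compact_imp_closed by blast
  show "y \<in> rel_interior G0"
  proof (rule ccontr)
    assume "y \<notin> rel_interior G0"
    then have "y \<in> rel_frontier G0" using yG cG unfolding rel_frontier_def by (simp add: closure_closed)
    then obtain H where H: "H face_of G0" "H \<noteq> G0" "y \<in> H"
      using rel_frontier_of_polyhedron_alt[OF polytope_imp_polyhedron[OF pG]] by blast
    have "H face_of Sbar" using face_of_trans[OF H(1) fG] .
    then have "G0 \<subseteq> H" unfolding G0_def using H(3) by blast
    moreover have "H \<subseteq> G0" using face_of_imp_subset[OF H(1)] .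
    ultimately show False using H(2) by blast
  qed
qed

lemma comb:
  assumes x: "x \<in> std_simplex" and z: "z \<in> Zs" and zmin: "\<forall>z'\<in>Zs. l1dist x z \<le> l1dist x z'"
    and xz: "x \<noteq> z"
  defines "lam \<equiv> l1dist x z / 2"
  defines "\<alpha> \<equiv> (\<chi> j. max (x$j - z$j) 0 / lam)" and "\<beta> \<equiv> (\<chi> j. max (z$j - x$j) 0 / lam)"
  shows "0 < lam \<and> lam \<le> 1 \<and> x - z = lam *\<^sub>R (\<alpha> - \<beta>) \<and>
    (\<exists>G. G face_of F \<and> G \<noteq> {} \<and> G \<noteq> Sbar \<and> ab \<beta> \<in> G \<and> ab \<alpha> \<in> convex hull {Abar j | j. Abar j \<notin> G})"
proof -
  have zS: "z \<in> std_simplex" "ab z = ab zs" using z unfolding Zs_def by auto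
  have xnn: "\<And>j. 0 \<le> x$j" and xs: "(\<Sum>j\<in>UNIV. x$j) = 1" using x by (auto simp: simplex_mem)
  have znn: "\<And>j. 0 \<le> z$j" and zsum: "(\<Sum>j\<in>UNIV. z$j) = 1" using zS by (auto simp: simplex_mem)
  obtain i0 where "x$i0 \<noteq> z$i0" using xz by (auto simp: vec_eq_iff)
  then have "0 < \<bar>x$i0 - z$i0\<bar>" by simp
  also have "\<dots> \<le> l1dist x z" unfolding l1dist_def by (rule member_le_sum) auto
  finally have lpos: "0 < lam" unfolding lam_def by simp
  have lle: "lam \<le> 1" unfolding lam_def using l1_bound[OF x zS(1)] by simp
  define P where "P = (\<Sum>j\<in>UNIV. max (x$j - z$j) 0)"
  define M where "M = (\<Sum>j\<in>UNIV. max (z$j - x$j) 0)"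
  have "P + M = l1dist x z" unfolding P_def M_def l1dist_def sum.distrib[symmetric]
    by (intro sum.cong) auto
  moreover have "P - M = 0"
  proof -
    have "P - M = (\<Sum>j\<in>UNIV. x$j - z$j)" unfolding P_def M_def sum_subtractf[symmetric]
      by (intro sum.cong) auto
    also have "\<dots> = 0" using xs zsum by (simp add: sum_subtractf)
    finally show ?thesis .
  qed
  ultimately have PM: "P = lam" "M = lam" unfolding lam_def by auto
  have aS: "\<alpha> \<in> std_simplex" unfolding simplex_mem \<alpha>_def
    using lpos PM(1) by (auto simp: P_def sum_divide_distrib[symmetric])
  have bS: "\<beta> \<in> std_simplex" unfolding simplex_mem \<beta>_def
    using lpos PM(2) by (auto simp: M_def sum_divide_distrib[symmetric])
  have xzab: "x - z = lam *\<^sub>R (\<alpha> - \<beta>)"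
    unfolding \<alpha>_def \<beta>_def using lpos by (auto simp: vec_eq_iff field_simps)
  have bF: "ab \<beta> \<in> F"
  proof -
    have "ab \<beta> \<in> convex hull (Abar ` {j. Abar j \<in> F})"
    proof (unfold ab_def, rule hull_repr_mem[OF bS])
      fix j assume "\<beta>$j \<noteq> 0"
      then have "z$j \<noteq> 0" using xnn[of j] unfolding \<beta>_def by (auto simp: max_def split: if_splits)
      then show "j \<in> {j. Abar j \<in> F}" using supp_in_F[OF zS] by simp
    qed
    moreover have "convex hull (Abar ` {j. Abar j \<in> F}) \<subseteq> F"
      using face_of_imp_convex[OF F_face] by (intro hull_minimal) auto
    ultimately show ?thesis by blast
  qed
  have bSb: "ab \<beta> \<in> Sbar" using ab_in[OF bS] .
  define G0 where "G0 = \<Inter>{H. H face_of Sbar \<and> ab \<beta> \<in> H}"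
  note G0 = min_face_relint[OF bSb, folded G0_def]
  have G0F: "G0 \<subseteq> F" unfolding G0_def using F_face bF by blast
  have G0face: "G0 face_of F" using face_of_face[OF F_face] G0(1) G0F by blast
  have noalpha: "Abar i \<notin> G0" if ai: "\<alpha>$i \<noteq> 0" for i
  proof
    assume iG: "Abar i \<in> G0"
    have cG: "convex G0" using face_of_imp_convex[OF G0(1)] .
    obtain e where e: "e > 1" "(1 - e) *\<^sub>R Abar i + e *\<^sub>R ab \<beta> \<in> G0"
      using iffD1[OF convex_rel_interior_iff[OF cG] G0(3)] iG by blast
    define r where "r = (1 - e) *\<^sub>R Abar i + e *\<^sub>R ab \<beta>"
    have "r \<in> Sbar" using e(2) face_of_imp_subset[OF G0(1)] unfolding r_def by blast
    then obtain \<rho> where \<rho>: "\<rho> \<in> std_simplex" "r = ab \<rho>" unfolding Sbar_repr by auto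
    define \<theta> where "\<theta> = 1 - 1 / e"
    have th: "0 < \<theta>" "\<theta> < 1" unfolding \<theta>_def using e(1) by (auto simp: field_simps)
    have bdec: "ab \<beta> = \<theta> *\<^sub>R Abar i + (1 - \<theta>) *\<^sub>R ab \<rho>"
      unfolding \<rho>(2)[symmetric] r_def \<theta>_def using e(1)
      by (simp add: algebra_simps)
    define z' where "z' = z - lam *\<^sub>R \<beta> + lam *\<^sub>R (\<theta> *\<^sub>R axis i 1 + (1 - \<theta>) *\<^sub>R \<rho>)"
    have \<rho>nn: "\<And>j. 0 \<le> \<rho>$j" and \<rho>s: "(\<Sum>j\<in>UNIV. \<rho>$j) = 1" using \<rho>(1) by (auto simp: simplex_mem)
    have zb: "\<And>j. (z - lam *\<^sub>R \<beta>)$j = min (z$j) (x$j)"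
      unfolding \<beta>_def using lpos by (auto simp: min_def max_def)
    have z'S: "z' \<in> std_simplex"
    proof -
      have "\<forall>j. 0 \<le> z'$j" unfolding z'_def using zb xnn znn \<rho>nn th lpos
        by (auto simp: axis_def intro!: add_nonneg_nonneg mult_nonneg_nonneg)
      moreover have "(\<Sum>j\<in>UNIV. z'$j) = 1"
        unfolding z'_def using zsum bS \<rho>s th
        by (simp add: sum.distrib sum_subtractf sum_distrib_left[symmetric] simplex_mem axis_def algebra_simps)
      ultimately show ?thesis by (simp add: simplex_mem)
    qed
    have abz': "ab z' = ab zs"
      unfolding z'_def ab_diff ab_add ab_scale ab_axis bdec[symmetric] zS(2) by simp
    have "z' \<in> Zs" unfolding Zs_def using z'S abz' by simp
    then have le: "l1dist x z \<le> l1dist x z'" using zmin by blast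
    define m where "m = min (\<alpha>$i) \<theta>"
    have ann: "\<And>j. 0 \<le> \<alpha>$j" and asum: "(\<Sum>j\<in>UNIV. \<alpha>$j) = 1" using aS by (auto simp: simplex_mem)
    have mpos: "0 < m" unfolding m_def using ai ann[of i] th by auto
    have xz': "\<And>j. x$j - z'$j = lam * (\<alpha>$j - \<theta> * (axis i 1 :: real^'n)$j - (1 - \<theta>) * \<rho>$j)"
    proof -
      fix j
      have "x$j - z$j = lam * (\<alpha>$j - \<beta>$j)" using xzab by (simp add: vec_eq_iff algebra_simps)
      then show "x$j - z'$j = lam * (\<alpha>$j - \<theta> * (axis i 1 :: real^'n)$j - (1 - \<theta>) * \<rho>$j)"
        unfolding z'_def by (simp add: algebra_simps)
    qed
    have comp: "\<bar>\<alpha>$j - \<theta> * (axis i 1 :: real^'n)$j - (1 - \<theta>) * \<rho>$j\<bar>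
        \<le> \<alpha>$j + \<theta> * (axis i 1 :: real^'n)$j + (1 - \<theta>) * \<rho>$j - (if j = i then 2 * m else 0)" for j
    proof (cases "j = i")
      case True
      have "\<bar>\<alpha>$i - \<theta> - (1 - \<theta>) * \<rho>$i\<bar> \<le> \<bar>\<alpha>$i - \<theta>\<bar> + (1 - \<theta>) * \<rho>$i"
        using abs_triangle_ineq4[of "\<alpha>$i - \<theta>" "(1 - \<theta>) * \<rho>$i"] th \<rho>nn[of i] by simp
      also have "\<bar>\<alpha>$i - \<theta>\<bar> = \<alpha>$i + \<theta> - 2 * m" unfolding m_def by (auto simp: min_def)
      finally show ?thesis using True by (simp add: axis_def)
    next
      case False
      then show ?thesis using ann[of j] \<rho>nn[of j] th by (simp add: axis_def abs_le_iff)
    qed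
    have "l1dist x z' = lam * (\<Sum>j\<in>UNIV. \<bar>\<alpha>$j - \<theta> * (axis i 1 :: real^'n)$j - (1 - \<theta>) * \<rho>$j\<bar>)"
      unfolding l1dist_def xz' using lpos by (simp add: abs_mult sum_distrib_left)
    also have "\<dots> \<le> lam * (\<Sum>j\<in>UNIV. \<alpha>$j + \<theta> * (axis i 1 :: real^'n)$j + (1 - \<theta>) * \<rho>$j - (if j = i then 2 * m else 0))"
      using lpos comp by (intro mult_left_mono sum_mono) auto
    also have "\<dots> = lam * (2 - 2 * m)"
      using asum \<rho>s by (simp add: sum.distrib sum_subtractf sum_distrib_left[symmetric] axis_def)
    also have "\<dots> < 2 * lam" using lpos mpos by simp
    also have "\<dots> = l1dist x z" unfolding lam_def by simp
    finally show False using le by simp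
  qed
  obtain i where ai: "\<alpha>$i \<noteq> 0"
  proof (rule ccontr)
    assume "\<not> thesis"
    then have "\<forall>i. \<alpha>$i = 0" using that by blast
    then show False using aS by (simp add: simplex_mem)
  qed
  have "G0 \<noteq> Sbar" using noalpha[OF ai] Abar_in[of i] by blast
  moreover have "G0 \<noteq> {}" using G0(2) by blast
  moreover have "ab \<alpha> \<in> convex hull {Abar j | j. Abar j \<notin> G0}"
  proof -
    have "ab \<alpha> \<in> convex hull (Abar ` {j. Abar j \<notin> G0})"
      unfolding ab_def using noalpha by (intro hull_repr_mem[OF aS]) auto
    moreover have "Abar ` {j. Abar j \<notin> G0} = {Abar j | j. Abar j \<notin> G0}" by auto
    ultimately show ?thesis by simp
  qed
  ultimately show ?thesis using lpos lle xzab G0face G0(2) by blast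
qed

end



context thm_ctx
begin

lemma N_sum: "finite I \<Longrightarrow> N (sum f I) \<le> (\<Sum>i\<in>I. N (f i))"
proof (induction I rule: finite_induct)
  case empty
  then show ?case using N_zero[of 0] by simp
next
  case (insert x F)
  then show ?case using N_tri[of "f x" "sum f F"] by simp
qed

lemma N_bound: "N x \<le> (\<Sum>i\<in>UNIV. N (axis i 1)) * norm x"
proof -
  have "x = (\<Sum>i\<in>UNIV. x$i *\<^sub>R axis i 1)"
    by (metis (no_types) basis_expansion scalar_mult_eq_scaleR)
  then have "N x = N (\<Sum>i\<in>UNIV. x$i *\<^sub>R axis i 1)" by simp
  also have "\<dots> \<le> (\<Sum>i\<in>UNIV. N (x$i *\<^sub>R axis i 1))" by (rule N_sum) simp
  also have "\<dots> = (\<Sum>i\<in>UNIV. \<bar>x$i\<bar> * N (axis i 1))" by (simp add: N_scale)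
  also have "\<dots> \<le> (\<Sum>i\<in>UNIV. norm x * N (axis i 1))"
    by (intro sum_mono mult_right_mono component_le_norm_cart N_nonneg)
  also have "\<dots> = (\<Sum>i\<in>UNIV. N (axis i 1)) * norm x" by (simp add: sum_distrib_left mult.commute)
  finally show ?thesis .
qed

lemma N_cont: "continuous_on UNIV N"
proof -
  define C where "C = (\<Sum>i\<in>(UNIV::'p set). N (axis i 1))"
  have C0: "0 \<le> C" unfolding C_def by (intro sum_nonneg N_nonneg)
  have "C-lipschitz_on UNIV N"
  proof (rule lipschitz_onI[OF _ C0])
    fix x y :: "real^'p"
    have "N x \<le> N (x - y) + N y" using N_tri[of "x - y" y] by simp
    moreover have "N y \<le> N (x - y) + N x" using N_tri[of "y - x" x] N_comm[of x y] by simp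
    ultimately have "\<bar>N x - N y\<bar> \<le> N (x - y)" by linarith
    also have "\<dots> \<le> C * norm (x - y)" unfolding C_def by (rule N_bound)
    finally show "dist (N x) (N y) \<le> C * dist x y" by (simp add: dist_norm dist_real_def)
  qed
  then show ?thesis by (rule lipschitz_on_continuous_on)
qed

lemma vnorm_cont: "continuous_on UNIV (vnorm N v)"
proof -
  have "continuous_on UNIV (\<lambda>w::(real^'p)\<times>real. N (fst w))"
    using continuous_on_compose[OF continuous_on_fst[OF continuous_on_id] N_cont[THEN continuous_on_subset]]
    by (simp add: o_def)
  then show ?thesis unfolding vnorm_def[abs_def] by (intro continuous_intros)
qed

lemma vnorm_nonneg: "0 \<le> vnorm N v w" unfolding vnorm_def by simp

lemma vnorm_sq: "(vnorm N v w)\<^sup>2 = (N (fst w))\<^sup>2 + \<bar>v \<bullet> fst w + snd w\<bar>"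
  unfolding vnorm_def by simp

lemma vnorm_pos: "w \<noteq> 0 \<Longrightarrow> 0 < vnorm N v w"
proof -
  assume w: "w \<noteq> 0"
  have "0 < (N (fst w))\<^sup>2 + \<bar>v \<bullet> fst w + snd w\<bar>"
  proof (cases "fst w = 0")
    case True
    then have "snd w \<noteq> 0" using w by (cases w) (auto simp: zero_prod_def)
    then show ?thesis using True N_zero[of 0] by simp
  next
    case False
    then have "N (fst w) \<noteq> 0" using N_zero by blast
    then show ?thesis by (simp add: add_pos_nonneg)
  qed
  then show ?thesis unfolding vnorm_def by simp
qed

lemma vnorm_scale: assumes "\<bar>c\<bar> \<le> 1" shows "c\<^sup>2 * (vnorm N v w)\<^sup>2 \<le> (vnorm N v (c *\<^sub>R w))\<^sup>2"
proof -
  define X where "X = \<bar>v \<bullet> fst w + snd w\<bar>"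
  define Y where "Y = (N (fst w))\<^sup>2"
  have "(vnorm N v (c *\<^sub>R w))\<^sup>2 = c\<^sup>2 * Y + \<bar>c\<bar> * X"
    unfolding vnorm_sq X_def Y_def by (simp add: N_scale power_mult_distrib abs_mult[symmetric] algebra_simps)
  moreover have "c\<^sup>2 * X \<le> \<bar>c\<bar> * X"
  proof -
    have "c\<^sup>2 = \<bar>c\<bar> * \<bar>c\<bar>" by (simp add: power2_eq_square)
    also have "\<dots> \<le> \<bar>c\<bar> * 1" by (rule mult_left_mono[OF assms]) simp
    finally have "c\<^sup>2 \<le> \<bar>c\<bar>" by simp
    then show ?thesis unfolding X_def by (rule mult_right_mono) simp
  qed
  moreover have "c\<^sup>2 * (vnorm N v w)\<^sup>2 = c\<^sup>2 * Y + c\<^sup>2 * X"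
    unfolding vnorm_sq X_def Y_def by (simp add: distrib_left)
  ultimately show ?thesis by linarith
qed

end




context opt_ctx
begin

definition H where "H G = convex hull {Abar j | j. Abar j \<notin> G}"
definition Gs where "Gs = {G. G face_of F \<and> G \<noteq> {} \<and> G \<noteq> Sbar}"
definition Dv where "Dv G = distv N v G (H G)"

lemma Gs_face: "G \<in> Gs \<Longrightarrow> G face_of Sbar"
  unfolding Gs_def using face_of_trans F_face by blast

lemma Gs_col: assumes "G \<in> Gs" obtains j where "Abar j \<notin> G"
proof -
  have fG: "G face_of Sbar" using Gs_face[OF assms] .
  have "\<exists>j. Abar j \<notin> G"
  proof (rule ccontr)
    assume "\<not> ?thesis"
    then have "range Abar \<subseteq> G" by auto
    then have "Sbar \<subseteq> G" using face_of_imp_convex[OF fG] by (intro hull_minimal)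
    then show False using face_of_imp_subset[OF fG] assms unfolding Gs_def by blast
  qed
  then show ?thesis using that by blast
qed

lemma H_ne: "G \<in> Gs \<Longrightarrow> H G \<noteq> {}"
  unfolding H_def by (metis (mono_tags, lifting) Gs_col convex_hull_eq_empty empty_iff mem_Collect_eq)

lemma H_compact: "compact (H G)"
proof -
  have "{Abar j | j. Abar j \<notin> G} \<subseteq> range Abar" by auto
  then have "finite {Abar j | j. Abar j \<notin> G}" by (rule finite_subset) simp
  then show ?thesis unfolding H_def by (rule finite_imp_compact_convex_hull)
qed

lemma G_compact: "G \<in> Gs \<Longrightarrow> compact G"
  using Gs_face face_of_polytope_polytope[OF Sbar_polytope] polytope_imp_compact by blast

lemma GH_disj: assumes "G \<in> Gs" shows "G \<inter> H G = {}"
proof -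
  have fG: "G face_of Sbar" using Gs_face[OF assms] .
  have "G exposed_face_of Sbar"
    using exposed_face_of_polyhedron[OF polytope_imp_polyhedron[OF Sbar_polytope]] fG by blast
  then obtain a c where ac: "Sbar \<subseteq> {x. a \<bullet> x \<le> c}" "G = Sbar \<inter> {x. a \<bullet> x = c}"
    unfolding exposed_face_of_def by blast
  have "{Abar j | j. Abar j \<notin> G} \<subseteq> {x. a \<bullet> x < c}"
    using ac Abar_in by fastforce
  then have "H G \<subseteq> {x. a \<bullet> x < c}" unfolding H_def
    by (intro hull_minimal) (auto simp: convex_halfspace_lt)
  then show ?thesis using ac(2) by auto
qed

lemma Dv_le: assumes "G \<in> Gs" "w \<in> G" "w' \<in> H G" shows "Dv G \<le> vnorm N v (w - w')"
proof -
  have mem: "vnorm N v (w - w') \<in> {vnorm N v (w - w') | w w'. w \<in> G \<and> w' \<in> H G}" using assms by blast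
  have bdd: "bdd_below {vnorm N v (w - w') | w w'. w \<in> G \<and> w' \<in> H G}"
    by (rule bdd_belowI[of _ 0]) (use vnorm_nonneg in blast)
  show ?thesis unfolding Dv_def distv_def by (rule cInf_lower[OF mem bdd])
qed

lemma Dv_pos: assumes G: "G \<in> Gs" shows "0 < Dv G"
proof -
  define K where "K = {w - w' | w w'. w \<in> G \<and> w' \<in> H G}"
  have Kc: "compact K" unfolding K_def using compact_differences[OF G_compact[OF G] H_compact] .
  have Kne: "K \<noteq> {}" unfolding K_def using H_ne[OF G] G unfolding Gs_def by blast
  obtain k0 where k0: "k0 \<in> K" "\<forall>k\<in>K. vnorm N v k0 \<le> vnorm N v k"
    using continuous_attains_inf[OF Kc Kne continuous_on_subset[OF vnorm_cont]] by blast
  obtain w w' where ww: "k0 = w - w'" "w \<in> G" "w' \<in> H G" using k0(1) unfolding K_def by blast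
  have "k0 \<noteq> 0"
  proof
    assume "k0 = 0"
    then have "w = w'" using ww(1) by simp
    then show False using ww GH_disj[OF G] by blast
  qed
  then have p: "0 < vnorm N v k0" by (rule vnorm_pos)
  have ne: "{vnorm N v (w - w') | w w'. w \<in> G \<and> w' \<in> H G} \<noteq> {}" using ww by blast
  have lb: "vnorm N v k0 \<le> y" if yin: "y \<in> {vnorm N v (w - w') | w w'. w \<in> G \<and> w' \<in> H G}" for y
  proof -
    obtain a a' where aa: "y = vnorm N v (a - a')" "a \<in> G" "a' \<in> H G" using yin by blast
    then have "a - a' \<in> K" unfolding K_def by blast
    then show ?thesis using k0(2) aa(1) by simp
  qed
  have "vnorm N v k0 \<le> Dv G" unfolding Dv_def distv_def
    by (rule cInf_greatest[OF ne lb])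
  then show ?thesis using p by simp
qed

lemma Gs_finite: "finite Gs"
proof -
  have "polytope F" using face_of_polytope_polytope[OF Sbar_polytope F_face] .
  then have "finite {G. G face_of F}" by (rule finite_polytope_faces)
  then show ?thesis unfolding Gs_def by (rule finite_subset[rotated]) auto
qed

lemma Abar_two: "\<exists>i j. Abar i \<noteq> Abar j"
proof -
  obtain i j where ij: "(E *v column i A, b \<bullet> column i A) \<noteq> (E *v column j A, b \<bullet> column j A)"
    using two_cols by blast
  have "Abar i \<noteq> Abar j"
  proof
    assume "Abar i = Abar j"
    then have "E *v column i A = E *v column j A" "(2/\<mu>) * (b \<bullet> column i A) = (2/\<mu>) * (b \<bullet> column j A)"
      unfolding Abar_def by auto
    then show False using ij mu_pos by simp
  qed
  then show ?thesis by blast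
qed

lemma Gs_ne: "Gs \<noteq> {}"
proof (cases "F = Sbar")
  case False
  have "F face_of F" using face_of_refl[OF face_of_imp_convex[OF F_face]] .
  then have "F \<in> Gs" unfolding Gs_def using False abzs_F by blast
  then show ?thesis by blast
next
  case True
  have cS: "compact Sbar" "convex Sbar" using polytope_imp_compact[OF Sbar_polytope] by auto
  have "Sbar = convex hull {x. x extreme_point_of Sbar}" by (rule Krein_Milman_Minkowski[OF cS])
  moreover have "Sbar \<noteq> {}" by simp
  ultimately have "{x. x extreme_point_of Sbar} \<noteq> {}" by (metis convex_hull_empty)
  then obtain e where e: "e extreme_point_of Sbar" by blast
  then have "{e} face_of Sbar" by (simp add: face_of_singleton)
  then have fe: "{e} face_of F" using True by simp
  obtain i j where ij: "Abar i \<noteq> Abar j" using Abar_two by blast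
  have "{e} \<noteq> Sbar"
  proof
    assume "{e} = Sbar"
    then have "Abar i = e" "Abar j = e" using Abar_in[of i] Abar_in[of j] by auto
    then show False using ij by simp
  qed
  then have "{e} \<in> Gs" unfolding Gs_def using fe by blast
  then show ?thesis by blast
qed

lemma Phi_eq: "local_facial_distance N v Abar = Inf (Dv ` Gs)"
proof -
  have "{distv N v G (convex hull {Abar j | j. Abar j \<notin> G}) | G.
            G face_of F \<and> G \<noteq> {} \<and> G \<noteq> convex hull (range Abar)} = Dv ` Gs"
    unfolding Dv_def H_def Gs_def by auto
  then show ?thesis unfolding local_facial_distance_def by simp
qed

lemma Phi_pos: "0 < local_facial_distance N v Abar"
proof -
  have "Inf (Dv ` Gs) = Min (Dv ` Gs)" using Gs_finite Gs_ne by (intro cInf_eq_Min) auto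
  moreover have "Min (Dv ` Gs) \<in> Dv ` Gs" using Gs_finite Gs_ne by (intro Min_in) auto
  ultimately show ?thesis unfolding Phi_eq using Dv_pos by auto
qed

lemma Phi_le: "G \<in> Gs \<Longrightarrow> local_facial_distance N v Abar \<le> Dv G"
proof -
  assume G: "G \<in> Gs"
  have "finite (Dv ` Gs)" using Gs_finite by blast
  then have "bdd_below (Dv ` Gs)" by (rule bdd_below_finite)
  then show ?thesis unfolding Phi_eq using G by (intro cInf_lower) auto
qed

end



context opt_ctx
begin

lemma l1_cont: "continuous_on UNIV (l1dist x)"
  unfolding l1dist_def[abs_def] by (intro continuous_intros)

lemma l1_nonneg: "0 \<le> l1dist x z" unfolding l1dist_def by (intro sum_nonneg) simp

lemma final: "qfg_const (\<lambda>u. g (E *v u) + ereal (b \<bullet> u)) A \<ge> ereal (\<mu> * (local_facial_distance N v Abar)\<^sup>2 / 4)"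
proof -
  define f where "f = (\<lambda>u. g (E *v u) + ereal (b \<bullet> u))"
  define \<Phi> where "\<Phi> = local_facial_distance N v Abar"
  have fA: "f (A *v x) = ereal (phi (A *v x))" if "x \<in> std_simplex" for x
  proof -
    have "A *v x \<in> S" using that unfolding S_repr by auto
    then show ?thesis unfolding f_def by (rule f_fin)
  qed
  have fs: "(INF x\<in>(std_simplex::(real^'n) set). f (A *v x)) = ereal (phi us)"
  proof (rule antisym)
    show "(INF x\<in>(std_simplex::(real^'n) set). f (A *v x)) \<le> ereal (phi us)"
      using INF_lower[OF zs(1), of "\<lambda>x. f (A *v x)"] fA[OF zs(1)] zs(2) by simp
    show "ereal (phi us) \<le> (INF x\<in>(std_simplex::(real^'n) set). f (A *v x))"
    proof (rule INF_greatest)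
      fix x :: "real^'n" assume x: "x \<in> std_simplex"
      have "A *v x \<in> S" using x unfolding S_repr by auto
      then show "ereal (phi us) \<le> f (A *v x)" using us_min fA[OF x] by simp
    qed
  qed
  have Zeq: "{z \<in> std_simplex. f (A *v z) = ereal (phi us)} = Zs"
    unfolding Zs_def using fA Z_char by auto
  have Zne: "Zs \<noteq> {}" using zs_Zs by blast
  have main: "ereal (\<mu> * \<Phi>\<^sup>2 / 4) \<le> 2 * (f (A *v x) - ereal (phi us)) / ereal ((INF z\<in>Zs. l1dist x z)\<^sup>2)"
    if x: "x \<in> std_simplex - Zs" for x
  proof -
    have xS: "x \<in> std_simplex" "x \<notin> Zs" using x by auto
    obtain z where z: "z \<in> Zs" "\<forall>z'\<in>Zs. l1dist x z \<le> l1dist x z'"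
      using continuous_attains_inf[OF Zs_compact Zne continuous_on_subset[OF l1_cont]] by blast
    have dz: "(INF z\<in>Zs. l1dist x z) = l1dist x z"
    proof (rule antisym)
      show "(INF z\<in>Zs. l1dist x z) \<le> l1dist x z"
        by (rule cINF_lower[OF _ z(1)]) (rule bdd_belowI[of _ 0], use l1_nonneg in blast)
      show "l1dist x z \<le> (INF z\<in>Zs. l1dist x z)"
        by (rule cINF_greatest[OF Zne]) (use z(2) in blast)
    qed
    have xz: "x \<noteq> z" using z(1) xS(2) by blast
    define lam where "lam = l1dist x z / 2"
    define \<alpha> where "\<alpha> = (\<chi> j. max (x$j - z$j) 0 / lam)"
    define \<beta> where "\<beta> = (\<chi> j. max (z$j - x$j) 0 / lam)"
    have C: "0 < lam \<and> lam \<le> 1 \<and> x - z = lam *\<^sub>R (\<alpha> - \<beta>) \<and>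
      (\<exists>G. G face_of F \<and> G \<noteq> {} \<and> G \<noteq> Sbar \<and> ab \<beta> \<in> G \<and> ab \<alpha> \<in> convex hull {Abar j | j. Abar j \<notin> G})"
      using comb[OF xS(1) z(1) z(2) xz] unfolding lam_def \<alpha>_def \<beta>_def .
    then obtain G where G: "G face_of F" "G \<noteq> {}" "G \<noteq> Sbar" "ab \<beta> \<in> G" "ab \<alpha> \<in> H G"
      unfolding H_def by blast
    have lam: "0 < lam" "lam \<le> 1" "x - z = lam *\<^sub>R (\<alpha> - \<beta>)" using C by auto
    have GG: "G \<in> Gs" unfolding Gs_def using G by blast
    define vn where "vn = vnorm N v (ab \<beta> - ab \<alpha>)"
    have Pv: "\<Phi> \<le> vn" unfolding \<Phi>_def vn_def using Phi_le[OF GG] Dv_le[OF GG G(4) G(5)] by linarith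
    have P0: "0 \<le> \<Phi>" unfolding \<Phi>_def using Phi_pos by simp
    have P2: "\<Phi>\<^sup>2 \<le> vn\<^sup>2" using Pv P0 by (rule power_mono)
    have zZ: "ab z = ab zs" using z(1) unfolding Zs_def by simp
    have dd: "ab x - ab zs = (- lam) *\<^sub>R (ab \<beta> - ab \<alpha>)"
    proof -
      have "ab x - ab zs = ab (x - z)" using zZ by (simp add: ab_diff)
      also have "\<dots> = lam *\<^sub>R (ab \<alpha> - ab \<beta>)" unfolding lam(3) ab_scale ab_diff ..
      finally show ?thesis by (simp add: algebra_simps)
    qed
    have vs: "lam\<^sup>2 * vn\<^sup>2 \<le> (vnorm N v (ab x - ab zs))\<^sup>2"
      using vnorm_scale[of "- lam" v "ab \<beta> - ab \<alpha>"] lam unfolding dd vn_def by simp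
    have pg: "phi (A *v x) - phi us \<ge> \<mu> / 2 * (vnorm N v (ab x - ab zs))\<^sup>2" using phi_gap[OF xS(1)] .
    have "lam\<^sup>2 * \<Phi>\<^sup>2 \<le> lam\<^sup>2 * vn\<^sup>2" using P2 by (simp add: mult_left_mono)
    then have a1: "lam\<^sup>2 * \<Phi>\<^sup>2 \<le> (vnorm N v (ab x - ab zs))\<^sup>2" using vs by linarith
    have "\<mu> * (lam\<^sup>2 * \<Phi>\<^sup>2) \<le> \<mu> * (vnorm N v (ab x - ab zs))\<^sup>2"
      using mult_left_mono[OF a1] mu_pos by simp
    also have "\<dots> \<le> 2 * (phi (A *v x) - phi us)" using pg by simp
    finally have key: "\<mu> * lam\<^sup>2 * \<Phi>\<^sup>2 \<le> 2 * (phi (A *v x) - phi us)" by (simp add: mult.assoc)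
    have ld: "l1dist x z = 2 * lam" unfolding lam_def by simp
    have real: "\<mu> * \<Phi>\<^sup>2 / 4 \<le> 2 * (phi (A *v x) - phi us) / (2 * lam)\<^sup>2"
    proof -
      have "(2 * lam)\<^sup>2 = 4 * lam\<^sup>2" by (simp add: power_mult_distrib)
      moreover have "0 < lam\<^sup>2" using lam by simp
      ultimately show ?thesis using key by (simp add: field_simps)
    qed
    have "2 * (f (A *v x) - ereal (phi us)) / ereal ((INF z\<in>Zs. l1dist x z)\<^sup>2)
        = ereal (2 * (phi (A *v x) - phi us) / (2 * lam)\<^sup>2)"
      unfolding dz ld fA[OF xS(1)] using lam by simp
    then show ?thesis using real by simp
  qed
  show ?thesis
    unfolding qfg_const_def Let_def f_def[symmetric] fs Zeq \<Phi>_def[symmetric]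
    by (rule INF_greatest) (rule main)
qed

end

context thm_ctx
begin

lemma main_thm:
  "argmin_on (convex hull (range (\<lambda>j. column j A))) (\<lambda>u. g (E *v u) + ereal (b \<bullet> u)) \<noteq> {}
    \<and> (\<forall>u1 \<in> argmin_on (convex hull (range (\<lambda>j. column j A))) (\<lambda>u. g (E *v u) + ereal (b \<bullet> u)).
       \<forall>u2 \<in> argmin_on (convex hull (range (\<lambda>j. column j A))) (\<lambda>u. g (E *v u) + ereal (b \<bullet> u)).
         (2 / \<mu>) *\<^sub>R grad g (E *v u1) = (2 / \<mu>) *\<^sub>R grad g (E *v u2))
    \<and> (\<forall>u \<in> argmin_on (convex hull (range (\<lambda>j. column j A))) (\<lambda>u. g (E *v u) + ereal (b \<bullet> u)).
         let v = (2 / \<mu>) *\<^sub>R grad g (E *v u);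
             Abar = (\<lambda>j. (E *v column j A, (2 / \<mu>) * (b \<bullet> column j A)))
         in qfg_const (\<lambda>u. g (E *v u) + ereal (b \<bullet> u)) A
              \<ge> ereal (\<mu> * (local_facial_distance N v Abar)\<^sup>2 / 4)
            \<and> local_facial_distance N v Abar > 0)"
proof (intro conjI ballI)
  show "argmin_on S (\<lambda>u. g (E *v u) + ereal (b \<bullet> u)) \<noteq> {}"
    using exists_min argmin_char by blast
next
  fix u1 u2
  assume "u1 \<in> argmin_on S (\<lambda>u. g (E *v u) + ereal (b \<bullet> u))"
    "u2 \<in> argmin_on S (\<lambda>u. g (E *v u) + ereal (b \<bullet> u))"
  then have "E *v u1 = E *v u2" using unique argmin_char by blast
  then show "(2 / \<mu>) *\<^sub>R grad g (E *v u1) = (2 / \<mu>) *\<^sub>R grad g (E *v u2)" by simp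
next
  fix u
  assume "u \<in> argmin_on S (\<lambda>u. g (E *v u) + ereal (b \<bullet> u))"
  then have u: "u \<in> S" "\<forall>u'\<in>S. phi u \<le> phi u'" using argmin_char by auto
  interpret o: opt_ctx N A b E g \<mu> u by (unfold_locales) (rule u(1), rule u(2))
  have "qfg_const (\<lambda>u. g (E *v u) + ereal (b \<bullet> u)) A \<ge> ereal (\<mu> * (local_facial_distance N o.v o.Abar)\<^sup>2 / 4)
      \<and> local_facial_distance N o.v o.Abar > 0"
    using o.final o.Phi_pos by simp
  then show "let v = (2 / \<mu>) *\<^sub>R grad g (E *v u);
             Abar = (\<lambda>j. (E *v column j A, (2 / \<mu>) * (b \<bullet> column j A)))
         in qfg_const (\<lambda>u. g (E *v u) + ereal (b \<bullet> u)) A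
              \<ge> ereal (\<mu> * (local_facial_distance N v Abar)\<^sup>2 / 4)
            \<and> local_facial_distance N v Abar > 0"
    unfolding Let_def o.v_def o.gv_def o.Abar_def .
qed

end



theorem theorem1:
  fixes N :: "real^'p \<Rightarrow> real"
    and A :: "real^'n^'m" and b :: "real^'m" and E :: "real^'m^'p"
    and g :: "real^'p \<Rightarrow> ereal" and \<mu> :: real
  assumes norm: "is_norm N"
    and two_cols: "\<exists>i j. (E *v column i A, b \<bullet> column i A) \<noteq> (E *v column j A, b \<bullet> column j A)"
    and g_proper: "\<forall>w. g w \<noteq> -\<infinity>"
    and g_convex: "ext_convex g"
    and g_diff: "\<forall>w. g w \<noteq> \<infinity> \<longrightarrow>
        (\<exists>U. open U \<and> w \<in> U \<and> (\<forall>x\<in>U. g x \<noteq> \<infinity>)) \<and>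
        (\<lambda>x. real_of_ereal (g x)) differentiable (at w)"
    and mu_pos: "\<mu> > 0"
    and g_strong: "strongly_convex_on N g \<mu> (convex hull (range (\<lambda>j. E *v column j A)))"
    and dom: "\<forall>u \<in> convex hull (range (\<lambda>j. column j A)). g (E *v u) + ereal (b \<bullet> u) \<noteq> \<infinity>"
  shows "argmin_on (convex hull (range (\<lambda>j. column j A))) (\<lambda>u. g (E *v u) + ereal (b \<bullet> u)) \<noteq> {}
    \<and> (\<forall>u1 \<in> argmin_on (convex hull (range (\<lambda>j. column j A))) (\<lambda>u. g (E *v u) + ereal (b \<bullet> u)).
       \<forall>u2 \<in> argmin_on (convex hull (range (\<lambda>j. column j A))) (\<lambda>u. g (E *v u) + ereal (b \<bullet> u)).
         (2 / \<mu>) *\<^sub>R grad g (E *v u1) = (2 / \<mu>) *\<^sub>R grad g (E *v u2))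
    \<and> (\<forall>u \<in> argmin_on (convex hull (range (\<lambda>j. column j A))) (\<lambda>u. g (E *v u) + ereal (b \<bullet> u)).
         let v = (2 / \<mu>) *\<^sub>R grad g (E *v u);
             Abar = (\<lambda>j. (E *v column j A, (2 / \<mu>) * (b \<bullet> column j A)))
         in qfg_const (\<lambda>u. g (E *v u) + ereal (b \<bullet> u)) A
              \<ge> ereal (\<mu> * (local_facial_distance N v Abar)\<^sup>2 / 4)
            \<and> local_facial_distance N v Abar > 0)"
proof -
  interpret thm_ctx N A b E g \<mu>
    by (rule thm_ctx.intro) (rule norm two_cols g_proper g_convex g_diff mu_pos g_strong dom)+
  show ?thesis by (rule main_thm)
qed

end
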